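(* Let $n,N,M,K\geq 1$, let $D=-i\sum_{j=1}^n\hat{D}_j\partial_j$ with $\hat{D}_j\in\mathcal{L}(\mathbb{C}^N,\mathbb{C}^M)$ and symbol $\hat{D}(\xi)=\sum_j\hat{D}_j\xi_j$, and let $A\in L^\infty(\mathbb{R}^n;\mathcal{L}(\mathbb{C}^M,\mathbb{C}^K))$. Suppose that for some $p\in[1,\infty)$ there is $c>0$ with $$\|ADu\|_{L^p(\mathbb{R}^n;\mathbb{C}^K)}\geq c\|Du\|_{L^p(\mathbb{R}^n;\mathbb{C}^M)}\qquad\text{for all }u\in C_c^\infty(\mathbb{R}^n;\mathbb{C}^N).$$ Then there is $c'>0$ such that $|A(x)\hat{D}(\xi)v|\geq c'|\hat{D}(\xi)v|$ for all $\xi\in\mathbb{R}^n$, all $v\in\mathbb{C}^N$, and almost every $x\in\mathbb{R}^n$. *)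

theory Defs
  imports "HOL-Analysis.Analysis"
begin

definition partial_deriv :: "(real^'n \<Rightarrow> 'a::real_normed_vector) \<Rightarrow> 'n \<Rightarrow> real^'n \<Rightarrow> 'a" where
  "partial_deriv f j x = frechet_derivative f (at x) (axis j 1)"

coinductive smooth_fun :: "(real^'n \<Rightarrow> 'a::real_normed_vector) \<Rightarrow> bool" where
  "(\<forall>x. f differentiable (at x)) \<Longrightarrow> (\<forall>j. smooth_fun (partial_deriv f j)) \<Longrightarrow> smooth_fun f"

definition test_fun :: "(real^'n \<Rightarrow> 'a::real_normed_vector) \<Rightarrow> bool" where
  "test_fun u \<longleftrightarrow> smooth_fun u \<and> compact (closure {x. u x \<noteq> 0})"

definition diff_op :: "('n \<Rightarrow> complex^'N^'M) \<Rightarrow> (real^'n \<Rightarrow> complex^'N) \<Rightarrow> real^'n \<Rightarrow> complex^'M" where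
  "diff_op Dh u x = (- \<i>) *s (\<Sum>j\<in>UNIV. Dh j *v partial_deriv u j x)"

definition symbol :: "('n \<Rightarrow> complex^'N^'M) \<Rightarrow> real^'n \<Rightarrow> complex^'N^'M" where
  "symbol Dh \<xi> = (\<Sum>j\<in>UNIV. (\<xi> $ j) *\<^sub>R Dh j)"

definition Lp_norm :: "real \<Rightarrow> (real^'n \<Rightarrow> 'a::real_normed_vector) \<Rightarrow> real" where
  "Lp_norm p f = (\<integral>x. norm (f x) powr p \<partial>lebesgue) powr (1 / p)"

definition Linfty :: "(real^'n \<Rightarrow> 'a::real_normed_vector) \<Rightarrow> bool" where
  "Linfty A \<longleftrightarrow> A \<in> borel_measurable lebesgue \<and> (\<exists>B. AE x in lebesgue. norm (A x) \<le> B)"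

end

theory Submission
  imports Defs "HOL-Computational_Algebra.Polynomial"
begin

fun hpoly :: "nat \<Rightarrow> real poly" where
  "hpoly 0 = 1"
| "hpoly (Suc k) = [:0,0,1:] * (hpoly k - pderiv (hpoly k))"

definition bmp :: "nat \<Rightarrow> real \<Rightarrow> real" where
  "bmp k t = (if t > 0 then poly (hpoly k) (1/t) * exp (-1/t) else 0)"

lemma poly_exp_lim: "((\<lambda>y::real. poly P y * exp (-y)) \<longlongrightarrow> 0) at_top"
proof -
  have eq: "(\<lambda>y. poly P y * exp (-y)) = (\<lambda>y. \<Sum>i\<le>degree P. coeff P i * (y ^ i / exp y))"
    by (auto simp: poly_altdef sum_divide_distrib exp_minus field_simps)
  show ?thesis unfolding eq
    by (intro tendsto_null_sum tendsto_mult_right_zero tendsto_power_div_exp_0)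
qed

lemma poly_exp_lim0: "((\<lambda>t::real. poly P (1/t) * exp (-1/t)) \<longlongrightarrow> 0) (at_right 0)"
proof -
  have "filterlim (\<lambda>t::real. inverse t) at_top (at_right 0)"
    by (rule filterlim_inverse_at_top_right)
  from filterlim_compose[OF poly_exp_lim[of P, unfolded filterlim_def[symmetric]] this] show ?thesis
    by (simp add: divide_inverse minus_divide_left)
qed

lemma bmp_deriv: "(bmp k has_real_derivative bmp (Suc k) t) (at t)"
proof -
  consider "t > 0" | "t < 0" | "t = 0" by linarith
  then show ?thesis
  proof cases
    case 1
    let ?f = "\<lambda>t. poly (hpoly k) (1/t) * exp (-1/t)"
    have "(?f has_real_derivative
         (poly (pderiv (hpoly k)) (1/t) * (- 1/t^2) * exp (-1/t) + poly (hpoly k) (1/t) * (exp (-1/t) * (1/t^2)))) (at t)"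
      using 1
      by (auto intro!: derivative_eq_intros DERIV_chain2[OF poly_DERIV] simp: power2_eq_square field_simps)
    moreover have "(poly (pderiv (hpoly k)) (1/t) * (- 1/t^2) * exp (-1/t) + poly (hpoly k) (1/t) * (exp (-1/t) * (1/t^2))) = bmp (Suc k) t"
      using 1 by (simp add: bmp_def algebra_simps power2_eq_square)
    ultimately have "(?f has_real_derivative bmp (Suc k) t) (at t)" by simp
    then show ?thesis
      apply (rule has_field_derivative_transform_within_open[where S="{0<..}"])
      using 1 by (auto simp: bmp_def)
  next
    case 2
    have "((\<lambda>_. 0) has_real_derivative 0) (at t)" by simp
    then have "((\<lambda>_. 0) has_real_derivative bmp (Suc k) t) (at t)" using 2 by (simp add: bmp_def)
    then show ?thesis
      apply (rule has_field_derivative_transform_within_open[where S="{..<0}"])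
      using 2 by (auto simp: bmp_def)
  next
    case 3
    have R: "((\<lambda>h. (bmp k h - bmp k 0) / h) \<longlongrightarrow> 0) (at_right 0)"
    proof -
      have "((\<lambda>h. poly ([:0,1:] * hpoly k) (1/h) * exp (-1/h)) \<longlongrightarrow> 0) (at_right 0)"
        by (rule poly_exp_lim0)
      then show ?thesis
        apply (rule tendsto_cong[THEN iffD1, rotated])
        by (auto simp: eventually_at_right_less bmp_def eventually_at_right_field intro!: exI[of _ 1])
    qed
    have L: "((\<lambda>h. (bmp k h - bmp k 0) / h) \<longlongrightarrow> 0) (at_left 0)"
      apply (rule tendsto_eventually)
      by (auto simp: bmp_def eventually_at_left_field intro!: exI[of _ "-1"])
    have "((\<lambda>h. (bmp k h - bmp k 0) / h) \<longlongrightarrow> 0) (at 0)"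
      using L R by (simp add: filterlim_split_at)
    then show ?thesis using 3
      by (simp add: has_field_derivative_iff bmp_def)
  qed
qed


lemma bmp_nonpos: "t \<le> 0 \<Longrightarrow> bmp k t = 0" by (simp add: bmp_def)
lemma bmp0_pos: "t > 0 \<Longrightarrow> bmp 0 t = exp (-1/t)" by (simp add: bmp_def)

definition Yc :: "real^'n \<Rightarrow> real^'n \<Rightarrow> 'n \<Rightarrow> real^'n \<Rightarrow> real" where
  "Yc a0 s i x = (x$i - a0$i) / s$i"

definition Fc :: "real^'n \<Rightarrow> real^'n \<Rightarrow> ('n \<Rightarrow> nat) \<Rightarrow> ('n \<Rightarrow> nat) \<Rightarrow> 'n \<Rightarrow> real^'n \<Rightarrow> real" where
  "Fc a0 s a b i x = bmp (a i) (Yc a0 s i x) * bmp (b i) (1 - Yc a0 s i x)"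

definition PP :: "real^'n::finite \<Rightarrow> real^'n \<Rightarrow> ('n \<Rightarrow> nat) \<Rightarrow> ('n \<Rightarrow> nat) \<Rightarrow> real^'n \<Rightarrow> real" where
  "PP a0 s a b x = (\<Prod>i\<in>UNIV. Fc a0 s a b i x)"

lemma Fc_deriv:
  "(Fc a0 s a b i has_derivative (\<lambda>h. h$i / s$i * (bmp (Suc (a i)) (Yc a0 s i x) * bmp (b i) (1 - Yc a0 s i x)
       - bmp (a i) (Yc a0 s i x) * bmp (Suc (b i)) (1 - Yc a0 s i x)))) (at x)"
proof -
  have Y: "(Yc a0 s i has_derivative (\<lambda>h. h$i / s$i)) (at x)"
  proof -
    have e: "Yc a0 s i = (\<lambda>x. (x$i - a0$i) * inverse (s$i))" by (auto simp: Yc_def divide_inverse)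
    show ?thesis unfolding e
    using bounded_linear_imp_has_derivative[OF bounded_linear_vec_nth[of i]]
    by (auto intro!: derivative_eq_intros simp: divide_inverse)
  qed
  have Y2: "((\<lambda>x. 1 - Yc a0 s i x) has_derivative (\<lambda>h. - (h$i / s$i))) (at x)"
    by (auto intro!: derivative_eq_intros Y)
  have 1: "((\<lambda>x. bmp (a i) (Yc a0 s i x)) has_derivative (\<lambda>h. h$i / s$i * bmp (Suc (a i)) (Yc a0 s i x))) (at x)"
    by (rule DERIV_compose_FDERIV[OF bmp_deriv Y])
  have 2: "((\<lambda>x. bmp (b i) (1 - Yc a0 s i x)) has_derivative (\<lambda>h. - (h$i / s$i) * bmp (Suc (b i)) (1 - Yc a0 s i x))) (at x)"
    by (rule DERIV_compose_FDERIV[OF bmp_deriv Y2])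
  show ?thesis unfolding Fc_def[abs_def]
    using has_derivative_mult[OF 1 2]
    by (simp add: algebra_simps)
qed

lemma PP_deriv:
  "(PP a0 s a b has_derivative (\<lambda>h. \<Sum>i\<in>UNIV. h$i / s$i * (bmp (Suc (a i)) (Yc a0 s i x) * bmp (b i) (1 - Yc a0 s i x)
       - bmp (a i) (Yc a0 s i x) * bmp (Suc (b i)) (1 - Yc a0 s i x)) * (\<Prod>j\<in>UNIV-{i}. Fc a0 s a b j x))) (at x)"
  unfolding PP_def[abs_def] by (rule has_derivative_prod, rule Fc_deriv)

lemma PP_partial:
  "(\<Sum>i\<in>UNIV. (axis j 1::real^'n::finite)$i / s$i * (bmp (Suc (a i)) (Yc a0 s i x) * bmp (b i) (1 - Yc a0 s i x)
       - bmp (a i) (Yc a0 s i x) * bmp (Suc (b i)) (1 - Yc a0 s i x)) * (\<Prod>j\<in>UNIV-{i}. Fc a0 s a b j x))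
   = (PP a0 s (a(j := Suc (a j))) b x - PP a0 s a (b(j := Suc (b j))) x) / s$j"
proof -
  have "(\<Sum>i\<in>UNIV. (axis j 1::real^'n)$i / s$i * (bmp (Suc (a i)) (Yc a0 s i x) * bmp (b i) (1 - Yc a0 s i x)
       - bmp (a i) (Yc a0 s i x) * bmp (Suc (b i)) (1 - Yc a0 s i x)) * (\<Prod>j\<in>UNIV-{i}. Fc a0 s a b j x))
     = 1 / s$j * (bmp (Suc (a j)) (Yc a0 s j x) * bmp (b j) (1 - Yc a0 s j x)
       - bmp (a j) (Yc a0 s j x) * bmp (Suc (b j)) (1 - Yc a0 s j x)) * (\<Prod>k\<in>UNIV-{j}. Fc a0 s a b k x)"
    by (subst sum.remove[of _ j]) (auto simp: axis_def)
  moreover have "PP a0 s (a(j := Suc (a j))) b x = bmp (Suc (a j)) (Yc a0 s j x) * bmp (b j) (1 - Yc a0 s j x) * (\<Prod>k\<in>UNIV-{j}. Fc a0 s a b k x)"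
    unfolding PP_def by (subst prod.remove[of _ j]) (auto simp: Fc_def intro!: prod.cong)
  moreover have "PP a0 s a (b(j := Suc (b j))) x = bmp (a j) (Yc a0 s j x) * bmp (Suc (b j)) (1 - Yc a0 s j x) * (\<Prod>k\<in>UNIV-{j}. Fc a0 s a b k x)"
    unfolding PP_def by (subst prod.remove[of _ j]) (auto simp: Fc_def intro!: prod.cong)
  ultimately show ?thesis by (simp add: field_simps)
qed

lemma PP_partial_deriv:
  "frechet_derivative (PP a0 s a b) (at x) (axis j 1) = (PP a0 s (a(j := Suc (a j))) b x - PP a0 s a (b(j := Suc (b j))) x) / s$j"
proof -
  let ?F = "(\<lambda>h. \<Sum>i\<in>UNIV. h$i / s$i * (bmp (Suc (a i)) (Yc a0 s i x) * bmp (b i) (1 - Yc a0 s i x)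
       - bmp (a i) (Yc a0 s i x) * bmp (Suc (b i)) (1 - Yc a0 s i x)) * (\<Prod>j\<in>UNIV-{i}. Fc a0 s a b j x))"
  have D: "(PP a0 s a b has_derivative ?F) (at x)" by (rule PP_deriv)
  have "frechet_derivative (PP a0 s a b) (at x) (axis j 1) = ?F (axis j 1)"
    by (simp only: frechet_derivative_at[OF D, symmetric])
  also have "\<dots> = (PP a0 s (a(j := Suc (a j))) b x - PP a0 s a (b(j := Suc (b j))) x) / s$j"
    by (rule PP_partial)
  finally show ?thesis .
qed


lemma bl_smult: "bounded_linear (\<lambda>c::complex. c *s (z::complex^'N::finite))"
proof -
  have "linear (\<lambda>c::complex. c *s z)"
    by (rule linearI) (auto simp: vec_eq_iff algebra_simps)
  then show ?thesis by (simp add: linear_conv_bounded_linear)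
qed

lemma has_derivative_smult_const:
  assumes "(f has_derivative f') (at x)"
  shows "((\<lambda>x. f x *s (z::complex^'N::finite)) has_derivative (\<lambda>h. f' h *s z)) (at x)"
  using bounded_linear.has_derivative[OF bl_smult[of z] assms] by simp

definition ee :: "real \<Rightarrow> real^'n \<Rightarrow> real^'n \<Rightarrow> complex" where
  "ee lam xi x = exp (\<i> * of_real (lam * (xi \<bullet> x)))"

lemma ee_deriv: "(ee lam xi has_derivative (\<lambda>h. (\<i> * of_real (lam * (xi \<bullet> h))) * ee lam xi x)) (at x)"
proof -
  have g: "((\<lambda>x. \<i> * of_real (lam * (xi \<bullet> x))) has_derivative (\<lambda>h. \<i> * of_real (lam * (xi \<bullet> h)))) (at x)"
    by (auto intro!: derivative_eq_intros)
  have e: "(exp has_derivative (*) (exp (\<i> * of_real (lam * (xi \<bullet> x))))) (at (\<i> * of_real (lam * (xi \<bullet> x))))"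
    using DERIV_exp has_field_derivative_def by blast
  from has_derivative_compose[OF g e] show ?thesis
    by (simp add: o_def mult.commute ee_def[abs_def])
qed

lemma norm_ee[simp]: "norm (ee lam xi x) = 1"
  by (simp add: ee_def norm_exp_i_times)

definition TT :: "real^'n::finite \<Rightarrow> real^'n \<Rightarrow> real \<Rightarrow> real^'n \<Rightarrow> ('n \<Rightarrow> nat) \<Rightarrow> ('n \<Rightarrow> nat) \<Rightarrow> complex^'N::finite \<Rightarrow> real^'n \<Rightarrow> complex^'N" where
  "TT a0 s lam xi a b z x = (ee lam xi x * of_real (PP a0 s a b x)) *s z"

inductive cls :: "real^'n::finite \<Rightarrow> real^'n \<Rightarrow> real \<Rightarrow> real^'n \<Rightarrow> (real^'n \<Rightarrow> complex^'N::finite) \<Rightarrow> bool"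
  for a0 s lam xi where
  clsT: "cls a0 s lam xi (TT a0 s lam xi a b z)"
| clsA: "cls a0 s lam xi f \<Longrightarrow> cls a0 s lam xi g \<Longrightarrow> cls a0 s lam xi (\<lambda>x. f x + g x)"

lemma PP_has_deriv: "(PP a0 s a b has_derivative frechet_derivative (PP a0 s a b) (at x)) (at x)"
  using PP_deriv frechet_derivative_works differentiable_def by blast

lemma TT_deriv:
  "(TT a0 s lam xi a b z has_derivative
     (\<lambda>h. ((\<i> * of_real (lam * (xi \<bullet> h))) * ee lam xi x * of_real (PP a0 s a b x)
        + ee lam xi x * of_real (frechet_derivative (PP a0 s a b) (at x) h)) *s z)) (at x)"
proof -
  have "((\<lambda>x. ee lam xi x * of_real (PP a0 s a b x)) has_derivative
     (\<lambda>h. (\<i> * of_real (lam * (xi \<bullet> h))) * ee lam xi x * of_real (PP a0 s a b x)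
        + ee lam xi x * of_real (frechet_derivative (PP a0 s a b) (at x) h))) (at x)"
    using has_derivative_mult[OF ee_deriv has_derivative_of_real[OF PP_has_deriv]]
    by (simp add: algebra_simps)
  from has_derivative_smult_const[OF this, of z] show ?thesis
    by (simp add: TT_def[abs_def])
qed

lemma TT_partial:
  "((\<i> * of_real (lam * (xi \<bullet> axis j 1))) * ee lam xi x * of_real (PP a0 s a b x)
        + ee lam xi x * of_real (frechet_derivative (PP a0 s a b) (at x) (axis j 1))) *s z
   = TT a0 s lam xi a b ((\<i> * of_real (lam * xi$j)) *s z) x
     + (TT a0 s lam xi (a(j := Suc (a j))) b (of_real (1 / s$j) *s z) x
     + TT a0 s lam xi a (b(j := Suc (b j))) (of_real (- 1 / s$j) *s z) x)"
  unfolding PP_partial_deriv TT_def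
  by (auto simp: vec_eq_iff inner_axis algebra_simps diff_divide_distrib)

lemma cls_deriv:
  assumes "cls a0 s lam xi f"
  shows "\<exists>f'. (\<forall>x. (f has_derivative f' x) (at x)) \<and> (\<forall>j. cls a0 s lam xi (\<lambda>x. f' x (axis j 1)))"
  using assms
proof induction
  case (clsT a b z)
  show ?case
  proof (intro exI conjI allI)
    show "(TT a0 s lam xi a b z has_derivative (\<lambda>h. ((\<i> * of_real (lam * (xi \<bullet> h))) * ee lam xi x * of_real (PP a0 s a b x)
        + ee lam xi x * of_real (frechet_derivative (PP a0 s a b) (at x) h)) *s z)) (at x)" for x
      by (rule TT_deriv)
    show "cls a0 s lam xi (\<lambda>x. ((\<i> * of_real (lam * (xi \<bullet> axis j 1))) * ee lam xi x * of_real (PP a0 s a b x)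
        + ee lam xi x * of_real (frechet_derivative (PP a0 s a b) (at x) (axis j 1))) *s z)" for j
      unfolding TT_partial by (intro cls.intros)
  qed
next
  case (clsA f g)
  then obtain f' g' where f: "\<forall>x. (f has_derivative f' x) (at x)" "\<forall>j. cls a0 s lam xi (\<lambda>x. f' x (axis j 1))"
    and g: "\<forall>x. (g has_derivative g' x) (at x)" "\<forall>j. cls a0 s lam xi (\<lambda>x. g' x (axis j 1))" by blast
  show ?case
    apply (rule exI[of _ "\<lambda>x h. f' x h + g' x h"])
    using f g by (auto intro: has_derivative_add cls.intros)
qed

lemma cls_smooth:
  assumes "cls a0 s lam xi f"
  shows "smooth_fun f"
  using assms
proof (coinduction arbitrary: f rule: smooth_fun.coinduct)
  case (smooth_fun f)
  then obtain f' where f: "\<forall>x. (f has_derivative f' x) (at x)" "\<forall>j. cls a0 s lam xi (\<lambda>x. f' x (axis j 1))"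
    using cls_deriv by blast
  have pd: "partial_deriv f j = (\<lambda>x. f' x (axis j 1))" for j
  proof
    fix x
    have "frechet_derivative f (at x) = f' x" using f(1) frechet_derivative_at[symmetric] by blast
    then show "partial_deriv f j x = f' x (axis j 1)" by (simp add: partial_deriv_def)
  qed
  show ?case
    using f pd by (auto simp: differentiable_def)
qed


lemma cont_meas: "continuous_on UNIV (f::real^'n::finite \<Rightarrow> 'b::euclidean_space) \<Longrightarrow> f \<in> borel_measurable lebesgue"
  using continuous_imp_measurable_on_sets_lebesgue[of UNIV f] by simp

lemma norm_smult_c: "norm ((c::complex) *s (y::complex^'N::finite)) = norm c * norm y"
proof -
  have "norm (c *s y) = L2_set (\<lambda>i. norm c * norm (y$i)) UNIV"
    by (simp add: norm_vec_def norm_mult)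
  also have "\<dots> = norm c * L2_set (\<lambda>i. norm (y$i)) UNIV"
    by (simp add: L2_set_right_distrib)
  finally show ?thesis by (simp add: norm_vec_def)
qed

lemma mv_smult: "(M::complex^'N::finite^'M::finite) *v (c *s y) = c *s (M *v y)"
  by (simp add: vec_eq_iff matrix_vector_mult_def sum_distrib_left algebra_simps)

lemma mv_scaleR_mat: "((r::real) *\<^sub>R (M::complex^'N::finite^'M::finite)) *v y = of_real r *s (M *v y)"
  apply (simp add: vec_eq_iff matrix_vector_mult_def sum_distrib_left)
  apply (simp add: scaleR_conv_of_real algebra_simps)
  done

lemma mv_sum_mat: "(\<Sum>j\<in>S. (M j::complex^'N::finite^'M::finite)) *v y = (\<Sum>j\<in>S. M j *v y)"
  by (induct S rule: infinite_finite_induct) (auto simp: matrix_vector_mult_add_rdistrib)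

lemma symbol_mv: "symbol Dh xi *v v = (\<Sum>j\<in>UNIV. of_real (xi$j) *s (Dh j *v v))"
  by (simp add: symbol_def mv_sum_mat mv_scaleR_mat)

lemma norm_mv_le: "norm ((M::complex^'N::finite^'M::finite) *v y) \<le> real CARD('M) * real CARD('N) * norm M * norm y"
proof -
  have c: "norm ((M *v y)$k) \<le> real CARD('N) * (norm M * norm y)" for k
  proof -
    have "norm ((M *v y)$k) = norm (\<Sum>m\<in>UNIV. M$k$m * y$m)" by (simp add: matrix_vector_mult_def)
    also have "\<dots> \<le> (\<Sum>m\<in>UNIV. norm (M$k$m * y$m))" by (rule norm_sum)
    also have "\<dots> \<le> (\<Sum>m\<in>(UNIV::'N set). norm M * norm y)"
    proof (rule sum_mono)
      fix m
      have "norm (M$k$m) \<le> norm M" using Finite_Cartesian_Product.norm_nth_le[of "M$k" m] Finite_Cartesian_Product.norm_nth_le[of M k] by linarith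
      moreover have "norm (y$m) \<le> norm y" using Finite_Cartesian_Product.norm_nth_le[of y m] by simp
      ultimately show "norm (M$k$m * y$m) \<le> norm M * norm y"
        by (simp add: norm_mult mult_mono)
    qed
    finally show ?thesis by simp
  qed
  have "norm (M *v y) \<le> (\<Sum>k\<in>UNIV. norm ((M *v y)$k))"
    by (simp add: norm_vec_def L2_set_le_sum)
  also have "\<dots> \<le> (\<Sum>k\<in>(UNIV::'M set). real CARD('N) * (norm M * norm y))"
    by (rule sum_mono) (rule c)
  finally show ?thesis by (simp add: algebra_simps)
qed

lemma cont_mv: "continuous_on UNIV (\<lambda>q. fst q *v snd q :: complex^'M::finite)"
  unfolding matrix_vector_mult_def
  apply (rule continuous_on_vec_lambda)
  apply (rule continuous_on_sum)
  apply (rule continuous_on_mult)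
   apply (rule continuous_on_component)+
   apply (rule continuous_on_fst, rule continuous_on_id)
  apply (rule continuous_on_component)+
  apply (rule continuous_on_snd, rule continuous_on_id)
  done

lemma bnd_cont:
  assumes "continuous_on UNIV (f::real^'n::finite \<Rightarrow> 'b::real_normed_vector)" "\<And>x. x \<notin> cbox a b \<Longrightarrow> f x = 0"
  shows "\<exists>M. \<forall>x. norm (f x) \<le> M"
proof -
  have "compact (f ` cbox a b)"
    by (rule compact_continuous_image) (auto intro: continuous_on_subset[OF assms(1)])
  then obtain M where M: "\<forall>y\<in>f ` cbox a b. norm y \<le> M"
    using compact_imp_bounded bounded_iff by metis
  show ?thesis
  proof (intro exI allI)
    fix x show "norm (f x) \<le> max M 0"
      using M assms(2)[of x] by (cases "x \<in> cbox a b") auto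
  qed
qed

definition PD :: "real^'n::finite \<Rightarrow> real^'n \<Rightarrow> 'n \<Rightarrow> real^'n \<Rightarrow> real" where
  "PD a0 s j x = frechet_derivative (PP a0 s (\<lambda>_. 0) (\<lambda>_. 0)) (at x) (axis j 1)"

lemma PD_eq: "PD a0 s j x = (PP a0 s ((\<lambda>_. 0)(j := 1)) (\<lambda>_. 0) x - PP a0 s (\<lambda>_. 0) ((\<lambda>_. 0)(j := 1)) x) / s$j"
  unfolding PD_def PP_partial_deriv by simp

lemma PP_cont: "continuous_on UNIV (PP a0 s a b)"
  by (meson PP_deriv continuous_at_imp_continuous_on has_derivative_continuous)

lemma PD_cont: "continuous_on UNIV (PD a0 s j)"
  unfolding PD_eq[abs_def] divide_inverse by (intro continuous_on_mult_right continuous_on_diff PP_cont)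

lemma PP_supp:
  assumes "\<forall>i. s$i > 0" "PP a0 s a b x \<noteq> 0"
  shows "x \<in> box a0 (a0 + s)"
proof -
  have "\<forall>i. Fc a0 s a b i x \<noteq> 0" using assms(2) by (auto simp: PP_def)
  then have "\<forall>i. Yc a0 s i x > 0 \<and> 1 - Yc a0 s i x > 0"
    unfolding Fc_def by (metis bmp_nonpos mult_zero_left mult_zero_right not_less)
  then show ?thesis using assms(1)
    by (auto simp: mem_box_cart Yc_def field_simps)
qed

lemma PD_supp:
  assumes "\<forall>i. s$i > 0" "x \<notin> cbox a0 (a0 + s)"
  shows "PD a0 s j x = 0"
proof -
  have "x \<notin> box a0 (a0 + s)" using assms(2) box_subset_cbox by blast
  then have "PP a0 s ((\<lambda>_. 0)(j := 1)) (\<lambda>_. 0) x = 0" "PP a0 s (\<lambda>_. 0) ((\<lambda>_. 0)(j := 1)) x = 0"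
    using PP_supp[OF assms(1)] by blast+
  then show ?thesis unfolding PD_eq by simp
qed

lemma PP0_supp:
  assumes "\<forall>i. s$i > 0" "x \<notin> cbox a0 (a0 + s)"
  shows "PP a0 s a b x = 0"
  using assms PP_supp box_subset_cbox by blast

lemma bmp0_le1: "0 \<le> bmp 0 t \<and> bmp 0 t \<le> 1"
  by (auto simp: bmp_def)

lemma PP_01: "0 \<le> PP a0 s (\<lambda>_. 0) (\<lambda>_. 0) x \<and> PP a0 s (\<lambda>_. 0) (\<lambda>_. 0) x \<le> 1"
  unfolding PP_def Fc_def using bmp0_le1
  by (auto intro!: prod_nonneg prod_le_1 mult_le_one)

lemma PP_lower:
  fixes x :: "real^'n::finite"
  assumes "\<forall>i. s$i > 0" "x \<in> cbox (a0 + (1/4) *\<^sub>R s) (a0 + (3/4) *\<^sub>R s)"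
  shows "PP a0 s (\<lambda>_. 0) (\<lambda>_. 0) x \<ge> exp (-8) ^ CARD('n)"
proof -
  have F: "exp (-8) \<le> Fc a0 s (\<lambda>_. 0) (\<lambda>_. 0) i x" for i
  proof -
    let ?y = "Yc a0 s i x"
    have y: "1/4 \<le> ?y" "?y \<le> 3/4" using assms by (auto simp: mem_box_cart Yc_def field_simps)
    have "exp (-4) \<le> exp (-1/?y)" using y by (auto simp: field_simps)
    moreover have "exp (-4) \<le> exp (-1/(1-?y))" using y by (auto simp: field_simps)
    ultimately have "exp (-4) * exp (-4) \<le> exp (-1/?y) * exp (-1/(1-?y))"
      by (intro mult_mono) auto
    moreover have "exp (-4) * exp (-4) = exp (-8::real)" by (simp flip: exp_add)
    ultimately show ?thesis using y by (simp add: Fc_def bmp_def)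
  qed
  have "(\<Prod>i\<in>(UNIV::'n set). exp (-8::real)) \<le> (\<Prod>i\<in>UNIV. Fc a0 s (\<lambda>_. 0) (\<lambda>_. 0) i x)"
    by (rule prod_mono) (use F in auto)
  then have "(\<Prod>i\<in>(UNIV::'n set). exp (-8)) \<le> PP a0 s (\<lambda>_. 0) (\<lambda>_. 0) x"
    unfolding PP_def .
  then show ?thesis by simp
qed


abbreviation "z0 \<equiv> (\<lambda>_::'n. 0::nat)"

definition uu :: "real^'n::finite \<Rightarrow> real^'n \<Rightarrow> real \<Rightarrow> real^'n \<Rightarrow> complex^'N::finite \<Rightarrow> real^'n \<Rightarrow> complex^'N" where
  "uu a0 s lam xi v = TT a0 s lam xi z0 z0 v"

definition RR :: "real^'n::finite \<Rightarrow> real^'n \<Rightarrow> ('n \<Rightarrow> complex^'N::finite^'M::finite) \<Rightarrow> complex^'N \<Rightarrow> real^'n \<Rightarrow> complex^'M" where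
  "RR a0 s Dh v x = (-\<i>) *s (\<Sum>j\<in>UNIV. of_real (PD a0 s j x) *s (Dh j *v v))"

lemma uu_test:
  assumes "\<forall>i. s$i > 0"
  shows "test_fun (uu a0 s lam xi v)"
  unfolding test_fun_def
proof
  show "smooth_fun (uu a0 s lam xi v)" unfolding uu_def by (rule cls_smooth, rule clsT)
  have "{x. uu a0 s lam xi v x \<noteq> 0} \<subseteq> cbox a0 (a0 + s)"
    using PP0_supp[OF assms] by (auto simp: uu_def TT_def)
  then have "closure {x. uu a0 s lam xi v x \<noteq> 0} \<subseteq> cbox a0 (a0 + s)"
    by (rule closure_minimal) (auto simp: closed_cbox)
  then show "compact (closure {x. uu a0 s lam xi v x \<noteq> 0})"
    by (meson bounded_cbox bounded_subset closed_closure compact_eq_bounded_closed)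
qed

lemma uu_partial:
  "partial_deriv (uu a0 s lam xi v) j x =
    ((\<i> * of_real (lam * xi$j)) * ee lam xi x * of_real (PP a0 s z0 z0 x) + ee lam xi x * of_real (PD a0 s j x)) *s v"
proof -
  have "frechet_derivative (uu a0 s lam xi v) (at x) = (\<lambda>h. ((\<i> * of_real (lam * (xi \<bullet> h))) * ee lam xi x * of_real (PP a0 s z0 z0 x)
        + ee lam xi x * of_real (frechet_derivative (PP a0 s z0 z0) (at x) h)) *s v)"
    unfolding uu_def by (rule frechet_derivative_at[OF TT_deriv, symmetric])
  then show ?thesis by (simp add: partial_deriv_def PD_def inner_axis)
qed

lemma uu_diff:
  "diff_op Dh (uu a0 s lam xi v) x = ee lam xi x *s (of_real (lam * PP a0 s z0 z0 x) *s (symbol Dh xi *v v) + RR a0 s Dh v x)"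
  unfolding diff_op_def uu_partial mv_smult symbol_mv RR_def
  by (simp add: vec_eq_iff sum_component sum_distrib_left sum.distrib algebra_simps sum_negf)


lemma Lp_scale:
  assumes "lam > 0" "p > 0" "\<And>x. norm (F x) = lam * G x" "\<And>x. G x \<ge> 0"
  shows "Lp_norm p F = lam * (\<integral>x. G x powr p \<partial>lebesgue) powr (1/p)"
proof -
  have "(\<lambda>x. norm (F x) powr p) = (\<lambda>x. lam powr p * G x powr p)"
    using assms by (simp add: powr_mult)
  then have I: "(\<integral>x. norm (F x) powr p \<partial>lebesgue) = lam powr p * (\<integral>x. G x powr p \<partial>lebesgue)"
    by simp
  have nn: "(\<integral>x. G x powr p \<partial>lebesgue) \<ge> 0" by (rule integral_nonneg_AE) auto
  have "Lp_norm p F = (lam powr p) powr (1/p) * (\<integral>x. G x powr p \<partial>lebesgue) powr (1/p)"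
    unfolding Lp_norm_def I using nn assms(1) by (simp add: powr_mult)
  also have "(lam powr p) powr (1/p) = lam" using assms by (simp add: powr_powr)
  finally show ?thesis .
qed

lemma powr_inv_p: "I \<ge> 0 \<Longrightarrow> p > 0 \<Longrightarrow> (I powr (1/p)) powr p = (I::real)"
  by (simp add: powr_powr)

lemma bl_smult_left: "bounded_linear (\<lambda>y::complex^'N::finite. (c::complex) *s y)"
proof -
  have "linear (\<lambda>y::complex^'N::finite. c *s y)"
    by (rule linearI) (auto simp: vec_eq_iff algebra_simps)
  then show ?thesis by (simp add: linear_conv_bounded_linear)
qed

lemma cont_smult: "continuous_on S f \<Longrightarrow> continuous_on S (\<lambda>x. (f x::complex) *s (y::complex^'N::finite))"
  using bounded_linear.continuous_on[OF bl_smult[of y]] by blast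

lemma cont_smult_left: "continuous_on S f \<Longrightarrow> continuous_on S (\<lambda>x. (c::complex) *s (f x::complex^'N::finite))"
  using bounded_linear.continuous_on[OF bl_smult_left[of c]] by blast

lemma RR_alt: "RR a0 s Dh v x = (\<Sum>j\<in>UNIV. of_real (PD a0 s j x) *s ((-\<i>) *s (Dh j *v v)))"
  by (simp add: RR_def vec_eq_iff sum_component sum_distrib_left algebra_simps sum_negf)

lemma RR_cont: "continuous_on UNIV (RR a0 s Dh v)"
  unfolding RR_alt[abs_def]
  by (intro continuous_on_sum cont_smult continuous_on_of_real PD_cont)

lemma RR_supp: "\<forall>i. s$i > 0 \<Longrightarrow> x \<notin> cbox a0 (a0 + s) \<Longrightarrow> RR a0 s Dh v x = 0"
  by (simp add: RR_def PD_supp)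

context
  fixes Dh :: "'n::finite \<Rightarrow> complex^'N::finite^'M::finite"
    and A :: "real^'n \<Rightarrow> complex^'M^'K::finite"
    and p c :: real
  assumes hp: "1 \<le> p" and hc: "c > 0"
    and hyp: "\<And>u :: real^'n \<Rightarrow> complex^'N. test_fun u \<Longrightarrow>
           Lp_norm p (\<lambda>x. A x *v diff_op Dh u x) \<ge> c * Lp_norm p (diff_op Dh u)"
begin

lemma step_a:
  assumes spos: "\<forall>i. s$i > 0" and lam: "lam > 0"
  shows "c powr p * (\<integral>x. norm (of_real (PP a0 s z0 z0 x) *s (symbol Dh xi *v v) + of_real (1/lam) *s RR a0 s Dh v x) powr p \<partial>lebesgue)
     \<le> (\<integral>x. norm (A x *v (of_real (PP a0 s z0 z0 x) *s (symbol Dh xi *v v) + of_real (1/lam) *s RR a0 s Dh v x)) powr p \<partial>lebesgue)"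
proof -
  define g where "g = (\<lambda>x. of_real (PP a0 s z0 z0 x) *s (symbol Dh xi *v v) + of_real (1/lam) *s RR a0 s Dh v x)"
  let ?u = "uu a0 s lam xi v"
  have D: "diff_op Dh ?u x = ee lam xi x *s (of_real lam *s g x)" for x
    using lam unfolding uu_diff g_def by (simp add: vec_eq_iff field_simps)
  have n1: "norm (diff_op Dh ?u x) = lam * norm (g x)" for x
    unfolding D norm_smult_c using lam by simp
  have n2: "norm (A x *v diff_op Dh ?u x) = lam * norm (A x *v g x)" for x
    unfolding D mv_smult norm_smult_c using lam by simp
  have p0: "p > 0" using hp by simp
  let ?I1 = "\<integral>x. norm (A x *v g x) powr p \<partial>lebesgue"
  let ?I2 = "\<integral>x. norm (g x) powr p \<partial>lebesgue"
  have L1: "Lp_norm p (\<lambda>x. A x *v diff_op Dh ?u x) = lam * ?I1 powr (1/p)"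
    by (rule Lp_scale[OF lam p0]) (auto simp: n2)
  have L2: "Lp_norm p (diff_op Dh ?u) = lam * ?I2 powr (1/p)"
    by (rule Lp_scale[OF lam p0]) (auto simp: n1)
  have "c * (lam * ?I2 powr (1/p)) \<le> lam * ?I1 powr (1/p)"
    using hyp[OF uu_test[OF spos, of a0 lam xi v]] L1 L2 by simp
  then have le: "c * ?I2 powr (1/p) \<le> ?I1 powr (1/p)"
    using lam by (simp add: algebra_simps)
  have nn1: "?I1 \<ge> 0" and nn2: "?I2 \<ge> 0" by (auto intro!: integral_nonneg_AE)
  have "(c * ?I2 powr (1/p)) powr p \<le> (?I1 powr (1/p)) powr p"
    by (rule powr_mono2) (use le hc p0 in auto)
  then have "c powr p * ?I2 \<le> ?I1"
    using hc nn1 nn2 p0 by (simp add: powr_mult powr_inv_p)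
  then show ?thesis unfolding g_def .
qed

lemma step_b:
  assumes spos: "\<forall>i. s$i > 0" and LA: "Linfty A"
  shows "c powr p * (\<integral>x. norm (of_real (PP a0 s z0 z0 x) *s (symbol Dh xi *v v)) powr p \<partial>lebesgue)
     \<le> (\<integral>x. norm (A x *v (of_real (PP a0 s z0 z0 x) *s (symbol Dh xi *v v))) powr p \<partial>lebesgue)"
proof -
  define w where "w = symbol Dh xi *v v"
  define P where "P = PP a0 s z0 z0"
  define R where "R = RR a0 s Dh v"
  define g where "g = (\<lambda>n x. of_real (P x) *s w + of_real (1/real (Suc n)) *s R x)"
  define gi where "gi = (\<lambda>x. of_real (P x) *s w)"
  define K where "K = cbox a0 (a0 + s)"
  have p0: "p > 0" using hp by simp
  have Ameas[measurable]: "A \<in> borel_measurable lebesgue" using LA by (simp add: Linfty_def)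
  obtain B where B: "AE x in lebesgue. norm (A x) \<le> B" using LA by (auto simp: Linfty_def)
  have Rc: "continuous_on UNIV R" unfolding R_def by (rule RR_cont)
  have Pc: "continuous_on UNIV P" unfolding P_def by (rule PP_cont)
  obtain MR where MR: "\<And>x. norm (R x) \<le> MR"
    using bnd_cont[OF Rc, of a0 "a0 + s"] RR_supp[OF spos] unfolding R_def by blast
  have P01: "0 \<le> P x \<and> P x \<le> 1" for x unfolding P_def by (rule PP_01)
  have Pz: "x \<notin> K \<Longrightarrow> P x = 0" for x unfolding P_def K_def using PP0_supp[OF spos] by blast
  have Rz: "x \<notin> K \<Longrightarrow> R x = 0" for x unfolding R_def K_def using RR_supp[OF spos] by blast
  have gc: "continuous_on UNIV (g n)" for n
    unfolding g_def by (intro continuous_on_add cont_smult cont_smult_left continuous_on_of_real Pc Rc continuous_on_const)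
  have gic: "continuous_on UNIV gi"
    unfolding gi_def by (intro cont_smult continuous_on_of_real Pc)
  have gm[measurable]: "g n \<in> borel_measurable lebesgue" for n by (rule cont_meas[OF gc])
  have gim[measurable]: "gi \<in> borel_measurable lebesgue" by (rule cont_meas[OF gic])
  have Agm: "(\<lambda>x. A x *v g n x) \<in> borel_measurable lebesgue" for n
    by (rule borel_measurable_continuous_Pair[OF Ameas gm cont_mv])
  have Agim: "(\<lambda>x. A x *v gi x) \<in> borel_measurable lebesgue"
    by (rule borel_measurable_continuous_Pair[OF Ameas gim cont_mv])
  have gb: "norm (g n x) \<le> norm w + MR" for n x
  proof -
    have "norm (g n x) \<le> norm (of_real (P x) *s w) + norm (of_real (1/real (Suc n)) *s R x)"
      unfolding g_def by (rule norm_triangle_ineq)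
    also have "\<dots> = \<bar>P x\<bar> * norm w + \<bar>1/real (Suc n)\<bar> * norm (R x)"
      by (simp only: norm_smult_c norm_of_real)
    also have "\<dots> \<le> 1 * norm w + 1 * MR"
      using P01[of x] MR[of x]
      by (intro add_mono mult_mono) (auto simp: field_simps)
    finally show ?thesis by simp
  qed
  have gz: "x \<notin> K \<Longrightarrow> g n x = 0" for n x using Pz Rz by (simp add: g_def)
  have giz: "x \<notin> K \<Longrightarrow> gi x = 0" for x using Pz by (simp add: gi_def)
  define CM where "CM = real CARD('K) * real CARD('M)"
  have CM0: "CM \<ge> 0" by (simp add: CM_def)
  let ?W1 = "\<lambda>x. (CM * B * (norm w + MR)) powr p * indicator K x"
  let ?W2 = "\<lambda>x. (norm w + MR) powr p * indicator K x"
  have Kl: "K \<in> sets lebesgue" "emeasure lebesgue K < \<infinity>"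
    unfolding K_def using lmeasurable_cbox fmeasurableD by (auto simp: fmeasurable_def)
  have W1i: "integrable lebesgue ?W1" using Kl by (intro integrable_mult_right integrable_real_indicator)
  have W2i: "integrable lebesgue ?W2" using Kl by (intro integrable_mult_right integrable_real_indicator)
  have bnd1: "AE x in lebesgue. norm (norm (A x *v g n x) powr p) \<le> ?W1 x" for n
    using B
  proof eventually_elim
    case (elim x)
    show ?case
    proof (cases "x \<in> K")
      case True
      have "norm (A x *v g n x) \<le> CM * norm (A x) * norm (g n x)"
        using norm_mv_le[of "A x" "g n x"] by (simp add: CM_def)
      also have "\<dots> \<le> CM * B * (norm w + MR)"
      proof -
        have B0: "0 \<le> B" using elim norm_ge_zero order_trans by blast
        show ?thesis using elim gb[of n x] CM0 B0 by (intro mult_mono) (auto intro: mult_left_mono)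
      qed
      finally show ?thesis using True p0 by (simp add: powr_mono2)
    next
      case False then show ?thesis using gz[of x n] by simp
    qed
  qed
  have bnd2: "AE x in lebesgue. norm (norm (g n x) powr p) \<le> ?W2 x" for n
  proof (rule AE_I2)
    fix x show "norm (norm (g n x) powr p) \<le> ?W2 x"
    proof (cases "x \<in> K")
      case True then show ?thesis using gb[of n x] p0 by (simp add: powr_mono2)
    next
      case False then show ?thesis using gz[of x n] by simp
    qed
  qed
  have invlim: "(\<lambda>n. of_real (1/real (Suc n)) :: complex) \<longlonglongrightarrow> 0"
  proof -
    have "(\<lambda>n. of_real (inverse (real (Suc n))) :: complex) \<longlonglongrightarrow> of_real 0"
      by (rule tendsto_of_real[OF LIMSEQ_inverse_real_of_nat])
    then show ?thesis by (simp only: inverse_eq_divide of_real_0)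
  qed
  have glim: "(\<lambda>n. g n x) \<longlonglongrightarrow> gi x" for x
  proof -
    have "(\<lambda>n. of_real (1/real (Suc n)) *s R x) \<longlonglongrightarrow> 0 *s R x"
      by (rule bounded_linear.tendsto[OF bl_smult invlim])
    then have "(\<lambda>n. of_real (P x) *s w + of_real (1/real (Suc n)) *s R x) \<longlonglongrightarrow> of_real (P x) *s w + 0 *s R x"
      by (intro tendsto_add tendsto_const)
    then show ?thesis by (simp add: g_def gi_def)
  qed
  have lim1: "(\<lambda>n. \<integral>x. norm (A x *v g n x) powr p \<partial>lebesgue) \<longlonglongrightarrow> (\<integral>x. norm (A x *v gi x) powr p \<partial>lebesgue)"
  proof (rule integral_dominated_convergence[OF _ _ W1i _ bnd1])
    show "(\<lambda>x. norm (A x *v gi x) powr p) \<in> borel_measurable lebesgue" using Agim by measurable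
    show "(\<lambda>x. norm (A x *v g n x) powr p) \<in> borel_measurable lebesgue" for n using Agm[of n] by measurable
    show "AE x in lebesgue. (\<lambda>n. norm (A x *v g n x) powr p) \<longlonglongrightarrow> norm (A x *v gi x) powr p"
    proof (rule AE_I2)
      fix x
      have "(\<lambda>n. A x *v g n x) \<longlonglongrightarrow> A x *v gi x"
        by (rule isCont_tendsto_compose[OF matrix_vector_mult_linear_continuous_at glim])
      then show "(\<lambda>n. norm (A x *v g n x) powr p) \<longlonglongrightarrow> norm (A x *v gi x) powr p"
        using p0 by (intro tendsto_powr2 tendsto_norm) auto
    qed
  qed
  have lim2: "(\<lambda>n. \<integral>x. norm (g n x) powr p \<partial>lebesgue) \<longlonglongrightarrow> (\<integral>x. norm (gi x) powr p \<partial>lebesgue)"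
  proof (rule integral_dominated_convergence[OF _ _ W2i _ bnd2])
    show "(\<lambda>x. norm (gi x) powr p) \<in> borel_measurable lebesgue" by measurable
    show "(\<lambda>x. norm (g n x) powr p) \<in> borel_measurable lebesgue" for n by measurable
    show "AE x in lebesgue. (\<lambda>n. norm (g n x) powr p) \<longlonglongrightarrow> norm (gi x) powr p"
      using p0 by (intro AE_I2 tendsto_powr2 tendsto_norm glim) auto
  qed
  have ineq: "c powr p * (\<integral>x. norm (g n x) powr p \<partial>lebesgue) \<le> (\<integral>x. norm (A x *v g n x) powr p \<partial>lebesgue)" for n
    unfolding g_def P_def R_def w_def by (rule step_a[OF spos]) simp
  have "c powr p * (\<integral>x. norm (gi x) powr p \<partial>lebesgue) \<le> (\<integral>x. norm (A x *v gi x) powr p \<partial>lebesgue)"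
    by (rule LIMSEQ_le[OF tendsto_mult_left[OF lim2] lim1]) (use ineq in auto)
  then show ?thesis by (simp add: gi_def P_def w_def)
qed

end


lemma negl_int_cbox:
  assumes "interior (cbox p q) \<inter> interior (cbox p' q') = {}"
  shows "negligible (cbox p q \<inter> cbox p' (q'::real^'n::finite))"
proof -
  have "cbox p q \<inter> cbox p' q' \<subseteq> (cbox p q - box p q) \<union> (cbox p' q' - box p' q')"
    using assms by (auto simp: interior_cbox)
  moreover have "negligible ((cbox p q - box p q) \<union> (cbox p' q' - box p' q'))"
    by (intro negligible_Un negligible_frontier_interval)
  ultimately show ?thesis using negligible_subset by blast
qed

lemma big_cube: "\<exists>k::nat. (x::real^'n::finite) \<in> cbox (vec (- real (Suc k))) (vec (real (Suc k)))"
proof -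
  obtain k::nat where k: "norm x \<le> real k" using real_arch_simple by blast
  have c: "- real (Suc k) \<le> x$i \<and> x$i \<le> real (Suc k)" for i
    using component_le_norm_cart[of x i] k by linarith
  have "x \<in> cbox (vec (- real (Suc k))) (vec (real (Suc k)))"
    unfolding mem_box_cart using c by simp
  then show ?thesis by blast
qed

lemma cube_lemma:
  fixes E :: "(real^'n::finite) set"
  assumes Em: "E \<in> sets lebesgue" and En: "emeasure lebesgue E \<noteq> 0" and ep: "\<epsilon> > 0"
  shows "\<exists>p q. (\<forall>i. p$i < q$i) \<and> measure lebesgue (cbox p q - E) < \<epsilon> * measure lebesgue (cbox p q)"
proof -
  define C where "C = (\<lambda>k::nat. cbox (vec (- real (Suc k))) (vec (real (Suc k))) :: (real^'n) set)"
  have "\<exists>k. emeasure lebesgue (E \<inter> C k) \<noteq> 0"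
  proof (rule ccontr)
    assume "\<not> ?thesis"
    then have "emeasure lebesgue (\<Union>k. E \<inter> C k) = 0"
      using Em by (intro emeasure_UN_eq_0) (auto simp: C_def)
    moreover have "(\<Union>k. E \<inter> C k) = E" using big_cube by (auto simp: C_def)
    ultimately show False using En by simp
  qed
  then obtain k where k: "emeasure lebesgue (E \<inter> C k) \<noteq> 0" by blast
  define a b where "a = (vec (- real (Suc k)) :: real^'n)" and "b = (vec (real (Suc k)) :: real^'n)"
  define S where "S = E \<inter> cbox a b"
  have Ssub: "S \<subseteq> cbox a b" by (auto simp: S_def)
  have Ssets: "S \<in> sets lebesgue" unfolding S_def using Em by (intro sets.Int) auto
  have Sl: "S \<in> lmeasurable"
    by (rule fmeasurableI2[OF lmeasurable_cbox Ssub Ssets])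
  define m where "m = measure lebesgue S"
  have m0: "m > 0"
  proof -
    have "emeasure lebesgue S = ennreal m" using Sl by (simp add: m_def emeasure_eq_measure2)
    moreover have "emeasure lebesgue S \<noteq> 0" using k by (simp add: S_def C_def a_def b_def)
    ultimately show ?thesis by (simp add: m_def zero_less_measure_iff) 
  qed
  have boxne: "box a b \<noteq> {}" by (simp add: interval_ne_empty_cart a_def b_def)
  have e0: "\<epsilon> * m / 4 > 0" using ep m0 by simp
  obtain \<D> where D1: "countable \<D>"
      and D2: "\<And>K. K \<in> \<D> \<Longrightarrow> K \<subseteq> cbox a b \<and> K \<noteq> {} \<and> (\<exists>c d. K = cbox c d)"
      and D3: "pairwise (\<lambda>A B. interior A \<inter> interior B = {}) \<D>"
      and D4: "\<And>u v. cbox u v \<in> \<D> \<Longrightarrow> \<exists>n. \<forall>i \<in> Basis. v \<bullet> i - u \<bullet> i = (b \<bullet> i - a \<bullet> i)/2^n"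
      and D5': "\<And>K. \<lbrakk>K \<in> \<D>; box a b \<noteq> {}\<rbrakk> \<Longrightarrow> interior K \<noteq> {}"
      and D6: "S \<subseteq> \<Union>\<D>" and D7: "\<Union>\<D> \<in> lmeasurable"
      and D8': "measure lebesgue (\<Union>\<D>) \<le> measure lebesgue S + \<epsilon> * m / 4"
    by (rule measurable_outer_intervals_bounded[OF Sl Ssub e0]) blast
  have D5: "\<And>K. K \<in> \<D> \<Longrightarrow> interior K \<noteq> {}" using D5' boxne by blast
  have D8: "measure lebesgue (\<Union>\<D>) \<le> m + \<epsilon> * m / 4" using D8' by (simp add: m_def)
  have Kl: "K \<in> lmeasurable" if "K \<in> \<D>" for K using D2[OF that] by auto
  have mD: "m \<le> measure lebesgue (\<Union>\<D>)"
    unfolding m_def by (rule measure_mono_fmeasurable[OF D6 _ D7]) (use Sl in auto)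
  have Bnd: "measure lebesgue (\<Union>D') \<le> measure lebesgue (\<Union>\<D>)" if "D' \<subseteq> \<D>" "finite D'" for D'
  proof (rule measure_mono_fmeasurable[OF _ _ D7])
    show "\<Union>D' \<subseteq> \<Union>\<D>" using that by auto
    show "\<Union>D' \<in> sets lebesgue"
      using fmeasurable.finite_Union[OF that(2)] Kl that(1) by auto
  qed
  have m2: "m / 2 > 0" using m0 by simp
  obtain D' where D'1: "D' \<subseteq> \<D>" and D'2: "finite D'"
    and D'3: "measure lebesgue (\<Union>\<D>) - m/2 < measure lebesgue (\<Union>D')"
    by (rule measure_countable_Union_approachable[OF D1 m2 Kl Bnd]) blast
  have negl: "negligible (K \<inter> K')" if "K \<in> D'" "K' \<in> D'" "K \<noteq> K'" for K K'
  proof -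
    have KD: "K \<in> \<D>" "K' \<in> \<D>" using that D'1 by auto
    obtain p q where K1: "K = cbox p q" using D2[OF KD(1)] by auto
    obtain p' q' where K2: "K' = cbox p' q'" using D2[OF KD(2)] by auto
    have "interior K \<inter> interior K' = {}" using D3 KD that(3) unfolding pairwise_def by auto
    then show ?thesis unfolding K1 K2 by (rule negl_int_cbox)
  qed
  show ?thesis
  proof (rule ccontr)
    assume nc: "\<not> ?thesis"
    have ge: "\<epsilon> * measure lebesgue K \<le> measure lebesgue (K - E)" if "K \<in> D'" for K
    proof -
      have KD: "K \<in> \<D>" using that D'1 by auto
      obtain p q where K: "K = cbox p q" using D2[OF KD] by auto
      have "interior K \<noteq> {}" by (rule D5[OF KD])
      then have pq: "\<forall>i. p$i < q$i" by (simp add: K interior_cbox interval_ne_empty_cart)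
      show ?thesis
      proof (rule ccontr)
        assume "\<not> \<epsilon> * measure lebesgue K \<le> measure lebesgue (K - E)"
        then have "measure lebesgue (cbox p q - E) < \<epsilon> * measure lebesgue (cbox p q)" by (simp add: K not_le)
        then have "\<exists>p q. (\<forall>i. p$i < q$i) \<and> measure lebesgue (cbox p q - E) < \<epsilon> * measure lebesgue (cbox p q)"
          using pq by (intro exI[of _ p] exI[of _ q]) simp
        then show False using nc by simp
      qed
    qed
    have KEl: "K - E \<in> lmeasurable" if "K \<in> D'" for K
    proof -
      have KD: "K \<in> \<D>" using that D'1 by auto
      have "K - E \<in> sets lebesgue" using Kl[OF KD] Em by (intro sets.Diff) auto
      then show ?thesis by (rule fmeasurableI2[OF Kl[OF KD] Diff_subset])
    qed
    have s1: "measure lebesgue (\<Union>D') = (\<Sum>K\<in>D'. measure lebesgue K)"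
      by (rule measure_negligible_finite_Union[OF D'2]) (use Kl D'1 negl in \<open>auto simp: pairwise_def\<close>)
    have s2: "measure lebesgue (\<Union>((\<lambda>K. K - E) ` D')) = (\<Sum>K\<in>D'. measure lebesgue (K - E))"
      by (rule measure_negligible_finite_Union_image[OF D'2 KEl]) (auto simp: pairwise_def intro: negligible_subset[OF negl])
    have "\<epsilon> * measure lebesgue (\<Union>D') \<le> (\<Sum>K\<in>D'. measure lebesgue (K - E))"
      unfolding s1 sum_distrib_left by (rule sum_mono) (rule ge)
    also have "\<dots> = measure lebesgue (\<Union>D' - E)" 
    proof -
      have "\<Union>((\<lambda>K. K - E) ` D') = \<Union>D' - E" by blast
      then show ?thesis using s2 by simp
    qed
    also have "\<dots> \<le> measure lebesgue (\<Union>\<D> - S)"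
    proof (rule measure_mono_fmeasurable)
      show "\<Union>D' - E \<subseteq> \<Union>\<D> - S" using D'1 by (auto simp: S_def)
      show "\<Union>D' - E \<in> sets lebesgue"
        using fmeasurable.finite_Union[OF D'2] Kl D'1 Em by auto
      show "\<Union>\<D> - S \<in> fmeasurable lebesgue" using D7 Sl by auto
    qed
    also have "\<dots> = measure lebesgue (\<Union>\<D>) - m"
      unfolding m_def by (rule measurable_measure_Diff[OF D7]) (use Sl D6 in auto)
    also have "\<dots> \<le> \<epsilon> * m / 4" using D8 by simp
    finally have "\<epsilon> * measure lebesgue (\<Union>D') \<le> \<epsilon> * m / 4" .
    moreover have "m / 2 < measure lebesgue (\<Union>D')" using D'3 mD by simp
    ultimately have "\<epsilon> * (m/2) < \<epsilon> * m / 4"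
      using ep by (smt (verit) mult_strict_left_mono)
    then show False using ep m0 by (simp add: field_simps)
  qed
qed


theorem propositionA2:
  fixes Dh :: "'n::finite \<Rightarrow> complex^'N::finite^'M::finite"
    and A :: "real^'n \<Rightarrow> complex^'M^'K::finite"
    and p c :: real
  assumes "Linfty A"
    and "1 \<le> p"
    and "c > 0"
    and "\<And>u :: real^'n \<Rightarrow> complex^'N. test_fun u \<Longrightarrow>
           Lp_norm p (\<lambda>x. A x *v diff_op Dh u x) \<ge> c * Lp_norm p (diff_op Dh u)"
  shows "\<exists>c'>0. \<forall>\<xi> :: real^'n. \<forall>v :: complex^'N. AE x in lebesgue.
           norm (A x *v (symbol Dh \<xi> *v v)) \<ge> c' * norm (symbol Dh \<xi> *v v)"
proof (intro exI[of _ "c/2"] conjI allI)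
  note LA = assms(1) and hp = assms(2) and hc = assms(3) and hyp = assms(4)
  show "c/2 > 0" using hc by simp
  fix \<xi> :: "real^'n" and v :: "complex^'N"
  define w where "w = symbol Dh \<xi> *v v"
  show "AE x in lebesgue. norm (A x *v (symbol Dh \<xi> *v v)) \<ge> c/2 * norm (symbol Dh \<xi> *v v)"
  proof (cases "w = 0")
    case True then show ?thesis by (simp add: w_def[symmetric])
  next
    case False
    have p0: "p > 0" using hp by simp
    have nw: "norm w > 0" using False by simp
    have Ameas[measurable]: "A \<in> borel_measurable lebesgue" using LA by (simp add: Linfty_def)
    obtain B where B: "AE x in lebesgue. norm (A x) \<le> B" using LA by (auto simp: Linfty_def)
    define B' where "B' = max B 0"
    have B': "AE x in lebesgue. norm (A x) \<le> B'" using B by eventually_elim (simp add: B'_def)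
    have B'0: "B' \<ge> 0" by (simp add: B'_def)
    have Awm[measurable]: "(\<lambda>x. A x *v w) \<in> borel_measurable lebesgue"
      by (rule borel_measurable_continuous_Pair[OF Ameas _ cont_mv]) simp
    define E where "E = {x. norm (A x *v w) < c/2 * norm w}"
    have "{x\<in>space lebesgue. norm (A x *v w) < c/2 * norm w} \<in> sets lebesgue" by measurable
    then have Em: "E \<in> sets lebesgue" unfolding E_def by simp
    have "emeasure lebesgue E = 0"
    proof (rule ccontr)
      assume En: "emeasure lebesgue E \<noteq> 0"
      define CM where "CM = real CARD('K) * real CARD('M)"
      have CM0: "CM \<ge> 0" by (simp add: CM_def)
      define \<delta> where "\<delta> = exp (-8::real) ^ CARD('n)"
      have \<delta>0: "\<delta> > 0" by (simp add: \<delta>_def)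
      define \<Gamma> where "\<Gamma> = c powr p - (c/2) powr p"
      have \<Gamma>0: "\<Gamma> > 0" unfolding \<Gamma>_def using hc p0 by (simp add: powr_less_mono2)
      define X where "X = (CM * B') powr p"
      have X0: "X \<ge> 0" by (simp add: X_def)
      define nn where "nn = (2::real) ^ CARD('n)"
      have nn0: "nn > 0" by (simp add: nn_def)
      define \<epsilon> where "\<epsilon> = \<Gamma> * \<delta> powr p / nn / (X + 1)"
      have \<epsilon>0: "\<epsilon> > 0" unfolding \<epsilon>_def using \<Gamma>0 \<delta>0 nn0 X0 by simp
      obtain a0 q where aq: "\<forall>i. a0$i < q$i" and small: "measure lebesgue (cbox a0 q - E) < \<epsilon> * measure lebesgue (cbox a0 q)"
        using cube_lemma[OF Em En \<epsilon>0] by blast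
      define s where "s = q - a0"
      have spos: "\<forall>i. s$i > 0" using aq by (simp add: s_def)
      have q: "a0 + s = q" by (simp add: s_def)
      define K where "K = cbox a0 q"
      define P where "P = PP a0 s z0 z0"
      have Kne: "cbox a0 q \<noteq> {}" using aq by (auto simp: interval_ne_empty_cart less_imp_le)
      have mK: "measure lebesgue K = (\<Prod>i\<in>UNIV. s$i)"
        unfolding K_def using content_cbox_cart[OF Kne] by (simp add: s_def)
      have mK0: "measure lebesgue K > 0" unfolding mK using spos by (simp add: prod_pos)
      define K' where "K' = cbox (a0 + (1/4) *\<^sub>R s) (a0 + (3/4) *\<^sub>R s)"
      have K'ne: "cbox (a0 + (1/4) *\<^sub>R s) (a0 + (3/4) *\<^sub>R s) \<noteq> {}"
        using spos by (auto simp: interval_ne_empty_cart less_imp_le)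
      have "measure lebesgue K' = (\<Prod>i\<in>UNIV. s$i / 2)"
        unfolding K'_def using content_cbox_cart[OF K'ne] by simp
      also have "\<dots> = measure lebesgue K / nn"
        unfolding mK nn_def by (simp add: prod_dividef)
      finally have mK': "measure lebesgue K' = measure lebesgue K / nn" .
      have Pc: "continuous_on UNIV P" unfolding P_def by (rule PP_cont)
      have Pm[measurable]: "P \<in> borel_measurable lebesgue" by (rule cont_meas[OF Pc])
      have P01: "0 \<le> P x \<and> P x \<le> 1" for x unfolding P_def by (rule PP_01)
      have Pz: "x \<notin> K \<Longrightarrow> P x = 0" for x unfolding P_def K_def using PP0_supp[OF spos, of x a0] q by simp
      have Plow: "x \<in> K' \<Longrightarrow> \<delta> \<le> P x" for x unfolding P_def K'_def \<delta>_def using PP_lower[OF spos] by blast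
      have Kl: "K \<in> sets lebesgue" "emeasure lebesgue K < \<infinity>"
        unfolding K_def using lmeasurable_cbox fmeasurableD by (auto simp: fmeasurable_def)
      have K'l: "K' \<in> sets lebesgue" "emeasure lebesgue K' < \<infinity>"
        unfolding K'_def using lmeasurable_cbox fmeasurableD by (auto simp: fmeasurable_def)
      have KEs: "K - E \<in> sets lebesgue" using Kl Em by auto
      have KEl: "K - E \<in> lmeasurable" unfolding K_def
        by (rule fmeasurableI2[OF lmeasurable_cbox Diff_subset]) (use KEs K_def in simp)
      have KEe: "emeasure lebesgue (K - E) < \<infinity>" using KEl unfolding fmeasurable_def by blast
      have Ppm: "(\<lambda>x. P x powr p) \<in> borel_measurable lebesgue" by measurable
      have Pint: "integrable lebesgue (\<lambda>x. P x powr p)"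
      proof (rule Bochner_Integration.integrable_bound[OF integrable_real_indicator[OF Kl] Ppm])
        show "AE x in lebesgue. norm (P x powr p) \<le> norm (indicator K x :: real)"
        proof (rule AE_I2)
          fix x show "norm (P x powr p) \<le> norm (indicator K x :: real)"
          proof (cases "x \<in> K")
            case True
            have "P x powr p \<le> 1 powr p" using P01[of x] p0 by (intro powr_mono2) auto
            then show ?thesis using True by simp
          next
            case False then show ?thesis using Pz[of x] by simp
          qed
        qed
      qed
      define J where "J = (\<integral>x. P x powr p \<partial>lebesgue)"
      have Jlow: "\<delta> powr p * measure lebesgue K' \<le> J"
      proof -
        have "(\<integral>x. \<delta> powr p * indicator K' x \<partial>lebesgue) \<le> J"
          unfolding J_def
        proof (rule integral_mono_AE'[OF Pint])
          show "AE x in lebesgue. \<delta> powr p * indicator K' x \<le> P x powr p"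
          proof (rule AE_I2)
            fix x show "\<delta> powr p * indicator K' x \<le> P x powr p"
            proof (cases "x \<in> K'")
              case True then show ?thesis using Plow[of x] \<delta>0 p0 by (simp add: powr_mono2)
            next
              case False then show ?thesis by simp
            qed
          qed
        qed simp
        then show ?thesis by (simp add: integral_indicator)
      qed
      have stepb: "c powr p * (\<integral>x. norm (of_real (PP a0 s z0 z0 x) *s (symbol Dh \<xi> *v v)) powr p \<partial>lebesgue)
         \<le> (\<integral>x. norm (A x *v (of_real (PP a0 s z0 z0 x) *s (symbol Dh \<xi> *v v))) powr p \<partial>lebesgue)"
        by (rule step_b[OF hp hc hyp spos LA])
      have e1: "norm (of_real (P x) *s w) powr p = norm w powr p * P x powr p" for x
        using P01[of x] by (simp add: norm_smult_c powr_mult mult.commute)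
      have e2: "norm (A x *v (of_real (P x) *s w)) powr p = (P x * norm (A x *v w)) powr p" for x
        using P01[of x] by (simp add: norm_smult_c mv_smult)
      define I where "I = (\<integral>x. (P x * norm (A x *v w)) powr p \<partial>lebesgue)"
      have low: "c powr p * norm w powr p * J \<le> I"
        using stepb unfolding I_def J_def P_def[symmetric] w_def[symmetric] e1 e2
        by (simp add: mult.assoc)
      define G where "G = (\<lambda>x. (c/2 * norm w) powr p * P x powr p + X * norm w powr p * indicator (K - E) x)"
      have Gint: "integrable lebesgue G"
        unfolding G_def
        by (intro Bochner_Integration.integrable_add Bochner_Integration.integrable_mult_right Pint integrable_real_indicator KEs KEe)
      have Gval: "integral\<^sup>L lebesgue G = (c/2 * norm w) powr p * J + X * norm w powr p * measure lebesgue (K - E)"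
        unfolding G_def J_def using KEs KEe
        by (subst Bochner_Integration.integral_add)
           (auto intro!: Bochner_Integration.integrable_mult_right Pint integrable_real_indicator simp: integral_indicator)
      have upper: "I \<le> integral\<^sup>L lebesgue G"
        unfolding I_def
      proof (rule integral_mono_AE'[OF Gint])
        show "AE x in lebesgue. 0 \<le> G x" unfolding G_def using X0 by (intro AE_I2) auto
        show "AE x in lebesgue. (P x * norm (A x *v w)) powr p \<le> G x"
          using B'
        proof eventually_elim
          case (elim x)
          have G1: "0 \<le> (c/2 * norm w) powr p * P x powr p" by simp
          have G2: "0 \<le> X * norm w powr p * indicator (K - E) x" using X0 by simp
          show ?case
          proof (cases "x \<in> E")
            case True
            then have "norm (A x *v w) \<le> c/2 * norm w" by (simp add: E_def)
            then have "P x * norm (A x *v w) \<le> P x * (c/2 * norm w)"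
              using P01[of x] by (intro mult_left_mono) auto
            then have "(P x * norm (A x *v w)) powr p \<le> (P x * (c/2 * norm w)) powr p"
              using P01[of x] p0 by (intro powr_mono2) auto
            also have "\<dots> = P x powr p * (c/2 * norm w) powr p"
              using P01[of x] hc by (intro powr_mult; auto)
            also have "\<dots> = (c/2 * norm w) powr p * P x powr p" by (rule mult.commute)
            finally show ?thesis unfolding G_def using G2 by linarith
          next
            case nE: False
            show ?thesis
            proof (cases "x \<in> K")
              case True
              have "norm (A x *v w) \<le> CM * norm (A x) * norm w"
                using norm_mv_le[of "A x" w] by (simp add: CM_def)
              also have "\<dots> \<le> CM * B' * norm w"
                using elim CM0 by (intro mult_right_mono mult_left_mono) auto
              finally have "P x * norm (A x *v w) \<le> 1 * (CM * B' * norm w)"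
                using P01[of x] by (intro mult_mono) auto
              then have "(P x * norm (A x *v w)) powr p \<le> (CM * B' * norm w) powr p"
                using P01[of x] p0 by (intro powr_mono2) auto
              also have "\<dots> = X * norm w powr p"
                unfolding X_def using CM0 B'0 by (simp add: powr_mult)
              finally have F: "(P x * norm (A x *v w)) powr p \<le> X * norm w powr p" .
              have "G x = (c/2 * norm w) powr p * P x powr p + X * norm w powr p"
                unfolding G_def using True nE by simp
              then show ?thesis using F G1 by linarith
            next
              case False
              then show ?thesis using Pz[of x] G1 G2 unfolding G_def by simp
            qed
          qed
        qed
      qed
      have nwp: "norm w powr p > 0" using nw by simp
      have cw: "(c/2 * norm w) powr p = (c/2) powr p * norm w powr p"
        by (rule powr_mult; use hc in auto)
      have H0: "c powr p * norm w powr p * J \<le> (c/2 * norm w) powr p * J + X * norm w powr p * measure lebesgue (K - E)"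
        using low upper Gval by simp
      have H: "c powr p * norm w powr p * J \<le> (c/2) powr p * norm w powr p * J + X * norm w powr p * measure lebesgue (K - E)"
        using H0 unfolding cw .
      then have "norm w powr p * (\<Gamma> * J) \<le> norm w powr p * (X * measure lebesgue (K - E))"
        unfolding \<Gamma>_def by (simp add: algebra_simps)
      then have A1: "\<Gamma> * J \<le> X * measure lebesgue (K - E)"
        using nwp by simp
      have A2: "X * measure lebesgue (K - E) \<le> X * (\<epsilon> * measure lebesgue K)"
        using small X0 unfolding K_def by (intro mult_left_mono) auto
      have A3: "X * \<epsilon> < \<Gamma> * \<delta> powr p / nn"
      proof -
        have "X * \<epsilon> = (X / (X + 1)) * (\<Gamma> * \<delta> powr p / nn)" unfolding \<epsilon>_def using X0 by (simp add: field_simps)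
        also have "\<dots> < 1 * (\<Gamma> * \<delta> powr p / nn)"
          using X0 \<Gamma>0 \<delta>0 nn0 by (intro mult_strict_right_mono) auto
        finally show ?thesis by simp
      qed
      have A4: "X * (\<epsilon> * measure lebesgue K) < \<Gamma> * \<delta> powr p / nn * measure lebesgue K"
      proof -
        have "(X * \<epsilon>) * measure lebesgue K < (\<Gamma> * \<delta> powr p / nn) * measure lebesgue K"
          by (rule mult_strict_right_mono[OF A3 mK0])
        then show ?thesis by (simp only: mult.assoc)
      qed
      have A5: "\<Gamma> * \<delta> powr p / nn * measure lebesgue K \<le> \<Gamma> * J"
      proof -
        have "\<delta> powr p * (measure lebesgue K / nn) \<le> J" using Jlow mK' by simp
        then have "\<Gamma> * (\<delta> powr p * (measure lebesgue K / nn)) \<le> \<Gamma> * J"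
          using \<Gamma>0 by (intro mult_left_mono) auto
        then show ?thesis by (simp add: field_simps)
      qed
      show False using A1 A2 A4 A5 by linarith
    qed
    then show ?thesis
      by (subst AE_iff_measurable[OF Em]) (auto simp: E_def w_def not_less)
  qed
qed

end
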